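(* Let $n\ge 2$ be an integer that is not a perfect square, and let $a,b$ be positive integers with $a^2-nb^2=1$. Put $u=a+b\sqrt n$, and let $h_j/k_j$ ($j\ge0$) be the convergents of the simple continued fraction expansion of $u$. Then $$\mathcal L\left(\frac1{u^2}\right)=\sum_{k=1}^{\infty}\mathcal L\left(\frac{1}{h_{2k-1}^2}\right).$$
   Context: $\mathcal L$ is the Rogers dilogarithm: for real $z\le1$, $\mathcal L(z)=\mathrm{Li}_2(z)+\tfrac12\log|z|\log(1-z)$, where $\mathrm{Li}_2(z)=\sum_{m\ge1}z^m/m^2$. If $u=[c_0,c_1,c_2,\dots]$ is the simple continued fraction expansion of $u$ ($c_0=\lfloor u\rfloor$, $c_i\ge1$ integers), the numerators and denominators of convergents are defined by $h_{-2}=0,h_{-1}=1,k_{-2}=1,k_{-1}=0$ and $h_i=c_ih_{i-1}+h_{i-2}$, $k_i=c_ik_{i-1}+k_{i-2}$ for $i\ge0$, so that $[c_0,\dots,c_i]=h_i/k_i$. *)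

theory Defs
  imports "HOL-Analysis.Analysis"
begin

text \<open>Dilogarithm as a power series (valid for |z| \<le> 1).\<close>
definition Li2 :: "real \<Rightarrow> real" where
  "Li2 z = (\<Sum>m. z ^ (Suc m) / (real (Suc m))\<^sup>2)"

definition rogers_L :: "real \<Rightarrow> real" where
  "rogers_L z = Li2 z + 1/2 * ln \<bar>z\<bar> * ln (1 - z)"

fun cf_rem :: "real \<Rightarrow> nat \<Rightarrow> real" where
  "cf_rem u 0 = u"
| "cf_rem u (Suc i) = 1 / (cf_rem u i - of_int \<lfloor>cf_rem u i\<rfloor>)"

definition cf_c :: "real \<Rightarrow> nat \<Rightarrow> int" where
  "cf_c u i = \<lfloor>cf_rem u i\<rfloor>"

text \<open>Shifted numerators: cf_hh u j = h_{j-2}, so h_{-2}=0, h_{-1}=1.\<close>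
fun cf_hh :: "real \<Rightarrow> nat \<Rightarrow> int" where
  "cf_hh u 0 = 0"
| "cf_hh u (Suc 0) = 1"
| "cf_hh u (Suc (Suc i)) = cf_c u i * cf_hh u (Suc i) + cf_hh u i"

definition cf_h :: "real \<Rightarrow> nat \<Rightarrow> int" where
  "cf_h u i = cf_hh u (i + 2)"

end

theory Submission
  imports Defs "HOL-Real_Asymp.Real_Asymp"
begin

lemma Li2_alt: "Li2 = (\<lambda>z. \<Sum>n. (1 / (real (Suc n))\<^sup>2) * z ^ Suc n)"
  unfolding Li2_def by (auto intro!: ext)

lemma Li2_has_deriv:
  assumes "\<bar>x\<bar> < 1"
  shows "(Li2 has_real_derivative (\<Sum>n. x^n / real (Suc n))) (at x)"
proof -
  have "DERIV (\<lambda>x. (\<Sum>n. (1 / (real (Suc n))\<^sup>2) * x^(Suc n))) x :>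
          (\<Sum>n. (1 / (real (Suc n))\<^sup>2) * real (Suc n) * x^n)"
  proof (rule DERIV_power_series'[where R=1])
    fix y :: real assume "y \<in> {-1<..<1}"
    hence y: "\<bar>y\<bar> < 1" by auto
    show "summable (\<lambda>n. 1 / (real (Suc n))\<^sup>2 * real (Suc n) * y ^ n)"
    proof (rule summable_comparison_test[of _ "\<lambda>n. \<bar>y\<bar>^n"])
      show "\<exists>N. \<forall>n\<ge>N. norm (1 / (real (Suc n))\<^sup>2 * real (Suc n) * y ^ n) \<le> \<bar>y\<bar> ^ n"
      proof (intro exI[of _ 0] allI impI)
        fix n :: nat
        have eq: "1 / (real (Suc n))\<^sup>2 * real (Suc n) * y ^ n = y^n / real (Suc n)"
          by (simp add: power2_eq_square)
        have "\<bar>y\<bar>^n / real (Suc n) \<le> \<bar>y\<bar>^n / 1"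
          by (intro divide_left_mono) auto
        thus "norm (1 / (real (Suc n))\<^sup>2 * real (Suc n) * y ^ n) \<le> \<bar>y\<bar> ^ n"
          unfolding eq by (simp add: power_abs)
      qed
      show "summable (\<lambda>n. \<bar>y\<bar> ^ n)" using y by (intro summable_geometric) simp
    qed
  qed (use assms in auto)
  moreover have "(\<Sum>n. (1 / (real (Suc n))\<^sup>2) * real (Suc n) * x^n) = (\<Sum>n. x^n / real (Suc n))"
    by (intro arg_cong[where f=suminf] ext) (simp add: power2_eq_square)
  ultimately show ?thesis by (simp add: Li2_alt)
qed

lemma Li2_deriv_val:
  assumes "\<bar>x\<bar> < 1" "x \<noteq> 0"
  shows "(\<Sum>n. x^n / real (Suc n)) = - ln (1 - x) / x"
proof -
  have "(\<lambda>n. - ((-(-x))^n) / of_nat n) sums ln (1 + (-x))"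
    using assms by (intro ln_series') auto
  hence "(\<lambda>n. - (x^n) / of_nat n) sums ln (1 - x)" by simp
  hence "(\<lambda>n. - (x^(Suc n)) / of_nat (Suc n)) sums ln (1 - x)"
    by (subst sums_Suc_iff) simp
  hence "(\<lambda>n. (- (x^(Suc n)) / of_nat (Suc n)) * (-1/x)) sums (ln (1 - x) * (-1/x))"
    by (rule sums_mult2)
  moreover have "(\<lambda>n. (- (x^(Suc n)) / of_nat (Suc n)) * (-1/x)) = (\<lambda>n. x^n / real (Suc n))"
    using assms by (auto intro!: ext simp: field_simps)
  ultimately show ?thesis by (simp add: sums_iff)
qed

lemma Li2_0: "Li2 0 = 0" by (simp add: Li2_def)

lemma rogers_L_0: "rogers_L 0 = 0" by (simp add: rogers_L_def Li2_0)

lemma isCont_Li2: "\<bar>x\<bar> < 1 \<Longrightarrow> isCont Li2 x"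
  using Li2_has_deriv DERIV_isCont by blast

lemma lnprod_tendsto: "((\<lambda>z::real. ln \<bar>z\<bar> * ln (1 - z)) \<longlongrightarrow> 0) (at 0)"
proof -
  have r: "((\<lambda>z::real. ln \<bar>z\<bar> * ln (1 - z)) \<longlongrightarrow> 0) (at_right 0)"
  proof -
    have "((\<lambda>z::real. ln z * ln (1 - z)) \<longlongrightarrow> 0) (at_right 0)" by real_asymp
    thus ?thesis
      by (rule Lim_transform_eventually)
         (rule eventually_mono[OF eventually_at_right_less], simp)
  qed
  have l: "((\<lambda>z::real. ln \<bar>z\<bar> * ln (1 - z)) \<longlongrightarrow> 0) (at_left 0)"
  proof -
    have "((\<lambda>z::real. ln (-z) * ln (1 - z)) \<longlongrightarrow> 0) (at_left 0)" by real_asymp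
    thus ?thesis
      by (rule Lim_transform_eventually)
         (subst eventually_at_left_field, auto intro!: exI[of _ "-1"])
  qed
  show ?thesis using r l by (simp add: filterlim_at_split)
qed

lemma isCont_rogers_L: "\<bar>x\<bar> < 1 \<Longrightarrow> isCont rogers_L x"
proof -
  assume x: "\<bar>x\<bar> < 1"
  have "rogers_L = (\<lambda>z. Li2 z + 1/2 * (ln \<bar>z\<bar> * ln (1 - z)))"
    by (auto simp: rogers_L_def fun_eq_iff)
  have "isCont (\<lambda>z::real. ln \<bar>z\<bar> * ln (1 - z)) x"
  proof (cases "x = 0")
    case True thus ?thesis using lnprod_tendsto by (simp add: isCont_def)
  next
    case False thus ?thesis using x by (intro continuous_intros) auto
  qed
  hence "isCont (\<lambda>z::real. 1/2 * (ln \<bar>z\<bar> * ln (1 - z))) x"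
    using continuous_mult[OF continuous_const] by blast
  hence "isCont (\<lambda>z. Li2 z + 1/2 * (ln \<bar>z\<bar> * ln (1 - z))) x"
    by (rule continuous_add[OF isCont_Li2[OF x]])
  moreover note \<open>rogers_L = _\<close>
  ultimately show ?thesis by simp
qed

definition Ld :: "real \<Rightarrow> real" where
  "Ld z = - (ln (1 - z) / z + ln z / (1 - z)) / 2"

lemma rogers_L_deriv:
  assumes "0 < z" "z < 1"
  shows "(rogers_L has_real_derivative Ld z) (at z)"
proof -
  have "((\<lambda>z. Li2 z + 1/2 * ln z * ln (1 - z)) has_real_derivative
        (- ln (1 - z) / z + 1/2 * ((1/z) * ln (1 - z) + ln z * (-1/(1-z))))) (at z)"
    using assms Li2_has_deriv[of z] Li2_deriv_val[of z]
    by (auto intro!: derivative_eq_intros simp: field_simps)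
  moreover have "(- ln (1 - z) / z + 1/2 * ((1/z) * ln (1 - z) + ln z * (-1/(1-z)))) = Ld z"
    using assms by (simp add: Ld_def field_simps)
  ultimately have d: "((\<lambda>z. Li2 z + 1/2 * ln z * ln (1 - z)) has_real_derivative Ld z) (at z)" by simp
  show ?thesis
  proof (rule has_field_derivative_transform_within_open[OF d, of "{0<..<1}"])
    show "\<And>y. y \<in> {0<..<1} \<Longrightarrow> Li2 y + 1/2 * ln y * ln (1 - y) = rogers_L y"
      by (simp add: rogers_L_def)
  qed (use assms in auto)
qed

lemma isCont_rogers_L_comp [continuous_intros]:
  fixes f :: "real \<Rightarrow> real"
  shows "isCont f t \<Longrightarrow> \<bar>f t\<bar> < 1 \<Longrightarrow> isCont (\<lambda>t. rogers_L (f t)) t"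
  by (rule isCont_o2[OF _ isCont_rogers_L])

lemma rogers_L_deriv_chain [derivative_intros]:
  "(f has_real_derivative f') (at t) \<Longrightarrow> 0 < f t \<Longrightarrow> f t < 1 \<Longrightarrow>
   ((\<lambda>t. rogers_L (f t)) has_real_derivative Ld (f t) * f') (at t)"
  using DERIV_chain2[OF rogers_L_deriv] by blast

lemma Ld_refl: "0 < z \<Longrightarrow> z < 1 \<Longrightarrow> Ld (1 - z) = Ld z"
  by (simp add: Ld_def)

lemma rogers_refl:
  assumes "0 < x" "x < 1" "0 < y" "y < 1"
  shows "rogers_L x + rogers_L (1 - x) = rogers_L y + rogers_L (1 - y)"
proof (rule DERIV_isconst3[where a=0 and b=1 and f="\<lambda>z. rogers_L z + rogers_L (1 - z)"])
  fix z :: real assume z: "z \<in> {0<..<1}"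
  have "((\<lambda>z. rogers_L z + rogers_L (1 - z)) has_real_derivative (Ld z * 1 + Ld (1 - z) * (0 - 1))) (at z)"
    using z by (intro derivative_intros) auto
  thus "((\<lambda>z. rogers_L z + rogers_L (1 - z)) has_real_derivative 0) (at z)"
    using z Ld_refl[of z] by simp
qed (use assms in auto)

lemma key_lin:
  fixes x t p q D lx lt l1x l1t lD :: real
  assumes nz: "x \<noteq> 0" "t \<noteq> 0" "p \<noteq> 0" "q \<noteq> 0" "D \<noteq> 0"
    and P: "p = 1 - t" and Q: "q = 1 - x" and D: "D = 1 - x*t"
  shows "(l1t/t + lt/p) - x * (lD/(x*t) + (lx+lt)/D)
      - (x*(-q)/D^2) * ((l1x-lD)*D/(x*p) + (lx+l1t-lD)*D/q)
      - (q/D^2) * ((l1t-lD)*D/(t*q) + (lt+l1x-lD)*D/p) = 0"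
  using nz
  apply (simp add: field_simps power2_eq_square)
  apply (simp add: D P Q)
  apply algebra
  done

lemma key_alg:
  assumes x: "0 < x" "x < 1" and t: "0 < t" "t < 1"
  shows "Ld t - x * Ld (x*t) - (x*(x-1)/(1-x*t)^2) * Ld (x*(1-t)/(1-x*t))
           - ((1-x)/(1-x*t)^2) * Ld (t*(1-x)/(1-x*t)) = 0"
proof -
  obtain D where D_def: "D = 1 - x*t" by blast
  obtain p where P: "p = 1 - t" by blast
  obtain q where Q: "q = 1 - x" by blast
  have Dsym: "1 - x*t = D" using D_def by simp
  have Psym: "1 - t = p" using P by simp
  have Qsym: "1 - x = q" using Q by simp
  have Qm: "x - 1 = -q" using Q by simp
  have d: "D > 0" using x t mult_strict_mono[of x 1 t 1] by (simp add: D_def)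
  have pq: "p > 0" "q > 0" using P Q x t by auto
  have l1: "ln (x*t) = ln x + ln t" using x t by (simp add: ln_mult)
  have l2: "ln (x*p/D) = ln x + ln p - ln D"
    using x pq d by (simp add: ln_mult ln_div)
  have l3: "ln (t*q/D) = ln t + ln q - ln D"
    using t pq d by (simp add: ln_mult ln_div)
  have e2: "1 - x*p/D = q/D" using d by (simp add: field_simps D_def P Q)
  have e3: "1 - t*q/D = p/D" using d by (simp add: field_simps D_def P Q)
  have l2': "ln (q/D) = ln q - ln D" using pq d by (simp add: ln_div)
  have l3': "ln (p/D) = ln p - ln D" using pq d by (simp add: ln_div)
  have L0: "Ld t = -(ln p/t + ln t/p)/2" by (simp add: Ld_def Psym)
  have L1: "Ld (x*t) = -(ln D/(x*t) + (ln x+ln t)/D)/2"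
    unfolding Ld_def l1 Dsym by simp
  have L2: "Ld (x*p/D) = -((ln q - ln D)*D/(x*p) + (ln x + ln p - ln D)*D/q)/2"
    unfolding Ld_def e2 l2 l2' by simp
  have L3: "Ld (t*q/D) = -((ln p - ln D)*D/(t*q) + (ln t + ln q - ln D)*D/p)/2"
    unfolding Ld_def e3 l3 l3' by simp
  have K: "(ln p/t + ln t/p) - x * (ln D/(x*t) + (ln x+ln t)/D)
      - (x*(-q)/D^2) * ((ln q - ln D)*D/(x*p) + (ln x + ln p - ln D)*D/q)
      - (q/D^2) * ((ln p - ln D)*D/(t*q) + (ln t + ln q - ln D)*D/p) = 0"
    using key_lin[where lx="ln x" and lt="ln t" and l1x="ln q" and l1t="ln p" and lD="ln D", OF _ _ _ _ _ P Q D_def]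
      x t d pq by simp
  have gen: "\<And>T A B C c e::real. T - x*A - c*B - e*C = 0 \<Longrightarrow>
      -T/2 - x*(-A/2) - c*(-B/2) - e*(-C/2) = 0"
    by (simp add: field_simps)
  show ?thesis unfolding Dsym Psym Qsym Qm L0 L1 L2 L3 by (rule gen[OF K])
qed

lemma five_bnds:
  fixes x t :: real
  assumes "0 < x" "x < 1" "0 \<le> t" "t < 1"
  shows "0 < 1 - x*t" "0 < x*(1-t)/(1-x*t)" "x*(1-t)/(1-x*t) < 1"
        "0 \<le> t*(1-x)/(1-x*t)" "t*(1-x)/(1-x*t) < 1" "0 \<le> x*t" "x*t < 1"
proof -
  have xt: "x*t < 1" using assms mult_strict_mono[of x 1 t 1] by (cases "t = 0") auto
  show "0 < 1 - x*t" "x*t < 1" using xt by auto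
  show "0 \<le> x*t" using assms by simp
  show "0 < x*(1-t)/(1-x*t)" using assms xt by simp
  show "x*(1-t)/(1-x*t) < 1" using assms xt by (simp add: divide_less_eq algebra_simps)
  show "0 \<le> t*(1-x)/(1-x*t)" using assms xt by simp
  show "t*(1-x)/(1-x*t) < 1" using assms xt by (simp add: divide_less_eq algebra_simps)
qed

lemma five_term:
  fixes x y :: real
  assumes x: "0 < x" "x < 1" and y: "0 < y" "y < 1"
  shows "rogers_L x + rogers_L y = rogers_L (x*y) + rogers_L (x*(1-y)/(1-x*y)) + rogers_L (y*(1-x)/(1-x*y))"
proof -
  define F where "F t = rogers_L x + rogers_L t - rogers_L (x*t) - rogers_L (x*(1-t)/(1-x*t))
     - rogers_L (t*(1-x)/(1-x*t))" for t
  have "F y = F 0"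
  proof (rule DERIV_isconst_end[where f=F and a=0 and b=y])
    show "0 < y" using y by simp
    show "continuous_on {0..y} F"
    proof (rule continuous_at_imp_continuous_on, rule ballI)
      fix t assume "t \<in> {0..y}"
      hence t: "0 \<le> t" "t < 1" using y by auto
      note b = five_bnds[OF x t]
      show "isCont F t" unfolding F_def
        using b t x by (intro continuous_intros) auto
    qed
    fix t assume t: "0 < t" "t < y"
    hence t': "0 \<le> t" "t < 1" using y by auto
    note b = five_bnds[OF x t']
    have dA: "((\<lambda>t. x*t) has_real_derivative x) (at t)"
      by (auto intro!: derivative_eq_intros)
    have dB: "((\<lambda>t. x*(1-t)/(1-x*t)) has_real_derivative x*(x-1)/(1-x*t)^2) (at t)"
      using b by (auto intro!: derivative_eq_intros simp: field_simps power2_eq_square)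
    have dC: "((\<lambda>t. t*(1-x)/(1-x*t)) has_real_derivative (1-x)/(1-x*t)^2) (at t)"
      using b by (auto intro!: derivative_eq_intros simp: field_simps power2_eq_square)
    have dI: "((\<lambda>t. t) has_real_derivative 1) (at t)" by (rule DERIV_ident)
    have pos: "0 < x*t" using x t by simp
    have "(F has_real_derivative (0 + Ld t * 1 - Ld (x*t) * x - Ld (x*(1-t)/(1-x*t)) * (x*(x-1)/(1-x*t)^2)
            - Ld (t*(1-x)/(1-x*t)) * ((1-x)/(1-x*t)^2))) (at t)"
      unfolding F_def
      apply (intro DERIV_diff DERIV_add DERIV_const)
         apply (rule rogers_L_deriv_chain[OF dI]; use t' t in auto)
        apply (rule rogers_L_deriv_chain[OF dA]; use b pos in auto)
       apply (rule rogers_L_deriv_chain[OF dB]; use b in auto)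
      apply (rule rogers_L_deriv_chain[OF dC]; use b t x in \<open>auto simp: field_simps\<close>)
      done
    moreover have "0 + Ld t * 1 - Ld (x*t) * x - Ld (x*(1-t)/(1-x*t)) * (x*(x-1)/(1-x*t)^2)
            - Ld (t*(1-x)/(1-x*t)) * ((1-x)/(1-x*t)^2) = 0"
      using key_alg[OF x t(1) t'(2)] by (simp add: algebra_simps)
    ultimately show "(F has_real_derivative 0) (at t)" by simp
  qed
  moreover have "F 0 = 0" by (simp add: F_def rogers_L_0)
  ultimately show ?thesis by (simp add: F_def algebra_simps)
qed

definition XX :: "real \<Rightarrow> real \<Rightarrow> real" where "XX Q P = (Q-1)*P/(Q*(P-1))"
definition YY :: "real \<Rightarrow> real \<Rightarrow> real" where "YY Q P = (Q-1)/(P-1)"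
definition ZZ :: "real \<Rightarrow> real \<Rightarrow> real" where "ZZ Q P = (Q-1)^2*P/(Q*(P-1)^2)"

lemma XY_bnds:
  assumes "Q > 1" "P > Q"
  shows "0 < XX Q P" "XX Q P < 1" "0 < YY Q P" "YY Q P < 1"
  using assms by (auto simp: XX_def YY_def field_simps)

lemma step_identity:
  assumes Q: "Q > 1" and P: "P > Q"
  shows "rogers_L (ZZ Q P) = (rogers_L (XX Q P) + rogers_L (YY Q P)) - (rogers_L (XX Q (P*Q)) + rogers_L (YY Q (P*Q)))"
proof -
  note b = XY_bnds[OF Q P]
  have P1: "P - 1 > 0" "P - Q > 0" using Q P by auto
  have PQ: "P*Q - 1 > 0" using Q P mult_strict_mono[of 1 P 1 Q] by simp
  obtain A where A: "A = Q*(P-1)^2" by blast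
  obtain B where B: "B = P - Q" by blast
  obtain E where E: "E = Q*P - 1" by blast
  have nz: "A \<noteq> 0" "B \<noteq> 0" "E \<noteq> 0" "P - 1 \<noteq> 0" "Q \<noteq> 0" using A B E P1 PQ Q by (auto simp: algebra_simps)
  have e1: "XX Q P * YY Q P = ZZ Q P"
    using Q P1 by (simp add: XX_def YY_def ZZ_def field_simps power2_eq_square)
  have den: "1 - XX Q P * YY Q P = E*B/A"
    unfolding e1 ZZ_def A B E using nz(4,5)
    apply (simp add: field_simps)
    apply algebra
    done
  have n2: "XX Q P * (1 - YY Q P) = ((Q-1)*P)*B/A"
    unfolding A B XX_def YY_def using nz(4,5)
    apply (simp add: field_simps)
    apply algebra?
    done
  have n3: "YY Q P * (1 - XX Q P) = (Q-1)*B/A"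
    unfolding A B XX_def YY_def using nz(4,5)
    apply (simp add: field_simps)
    apply algebra?
    done
  have e2: "XX Q P * (1 - YY Q P) / (1 - XX Q P * YY Q P) = XX Q (P*Q)"
    unfolding den n2 using nz by (simp add: XX_def E field_simps)
  have e3: "YY Q P * (1 - XX Q P) / (1 - XX Q P * YY Q P) = YY Q (P*Q)"
    unfolding den n3 using nz by (simp add: YY_def E field_simps)
  note h = five_term[OF b, unfolded e2 e3]
  from h[unfolded e1] show ?thesis by simp
qed

lemma tele_sums:
  fixes Q :: real
  assumes Q: "Q > 1"
  shows "(\<lambda>k. rogers_L (ZZ Q (Q^(k+2)))) sums rogers_L (1/Q)"
proof -
  define g where "g n = rogers_L (XX Q (Q^(n+2))) + rogers_L (YY Q (Q^(n+2)))" for n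
  define r where "r = 1/Q"
  have r: "0 < r" "r < 1" using Q by (auto simp: r_def)
  have Qgt: "Q^(k+2) > Q" for k
  proof -
    have "Q^1 < Q^(k+2)" using Q by (intro power_strict_increasing) auto
    thus ?thesis by simp
  qed
  have tm: "rogers_L (ZZ Q (Q^(k+2))) = g k - g (Suc k)" for k
    using step_identity[OF Q Qgt[of k]] by (simp add: g_def algebra_simps)
  have rn: "(\<lambda>n. r^(n+2)) \<longlonglongrightarrow> 0"
  proof -
    have "(\<lambda>n. r^2 * r^n) \<longlonglongrightarrow> r^2 * 0"
      using r by (intro tendsto_intros LIMSEQ_power_zero) auto
    moreover have "(\<lambda>n. r^2 * r^n) = (\<lambda>n. r^(n+2))" by (auto simp: power_add power2_eq_square mult_ac)
    ultimately show ?thesis by simp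
  qed
  have rlt: "r^(n+2) < 1" for n using r power_strict_mono[of r 1 "n+2"] by simp
  have Xeq: "XX Q (Q^(n+2)) = (Q-1)/Q / (1 - r^(n+2))" for n
  proof -
    have "Q^(n+2) > 1" by (rule one_less_power[OF Q]) simp
    thus ?thesis using Q by (simp add: XX_def r_def field_simps power_one_over)
  qed
  have Yeq: "YY Q (Q^(n+2)) = (Q-1) * r^(n+2) / (1 - r^(n+2))" for n
  proof -
    have "Q^(n+2) > 1" by (rule one_less_power[OF Q]) simp
    thus ?thesis using Q by (simp add: YY_def r_def field_simps power_one_over)
  qed
  have X: "(\<lambda>n. XX Q (Q^(n+2))) \<longlonglongrightarrow> (Q-1)/Q / (1 - 0)"
    unfolding Xeq by (intro tendsto_intros rn) simp
  have Y: "(\<lambda>n. YY Q (Q^(n+2))) \<longlonglongrightarrow> (Q-1) * 0 / (1 - 0)"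
    unfolding Yeq by (intro tendsto_intros rn) simp
  have c1: "isCont rogers_L ((Q-1)/Q / (1 - 0))" using Q by (intro isCont_rogers_L) auto
  have c2: "isCont rogers_L ((Q-1) * 0 / (1 - 0))" by (intro isCont_rogers_L) auto
  have glim: "g \<longlonglongrightarrow> rogers_L ((Q-1)/Q) + rogers_L 0"
    unfolding g_def using isCont_tendsto_compose[OF c1 X] isCont_tendsto_compose[OF c2 Y]
    by (intro tendsto_add) auto
  have s: "(\<lambda>n. g n - g (Suc n)) sums (g 0 - (rogers_L ((Q-1)/Q) + rogers_L 0))"
    by (rule telescope_sums'[OF glim])
  have g0: "g 0 = rogers_L (1 - 1/(Q+1)) + rogers_L (1/(Q+1))"
  proof -
    have h: "Q^2 - 1 = (Q-1)*(Q+1)" by (simp add: algebra_simps power2_eq_square)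
    have h': "Q*Q - 1 = (Q-1)*(Q+1)" by (simp add: algebra_simps)
    have nz: "Q - 1 \<noteq> 0" "Q + 1 \<noteq> 0" "Q \<noteq> 0" using Q by auto
    have "XX Q (Q^2) = (Q-1)*(Q*Q)/(Q*((Q-1)*(Q+1)))" by (simp only: XX_def power2_eq_square h')
    also have "\<dots> = ((Q-1)*Q)*Q/(((Q-1)*Q)*(Q+1))" by (simp only: mult_ac)
    also have "\<dots> = Q/(Q+1)" using nz by (intro mult_divide_mult_cancel_left) simp
    also have "\<dots> = 1 - 1/(Q+1)" using nz by (simp add: field_simps)
    finally have "XX Q (Q^2) = 1 - 1/(Q+1)" .
    moreover have "YY Q (Q^2) = 1/(Q+1)" using nz by (simp only: YY_def h) simp
    moreover have "g 0 = rogers_L (XX Q (Q^2)) + rogers_L (YY Q (Q^2))" by (simp add: g_def power2_eq_square)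
    ultimately show ?thesis by simp
  qed
  have refl: "rogers_L (1/(Q+1)) + rogers_L (1 - 1/(Q+1)) = rogers_L (1/Q) + rogers_L (1 - 1/Q)"
    using Q by (intro rogers_refl) auto
  have "(Q-1)/Q = 1 - 1/Q" using Q by (simp add: field_simps)
  hence "g 0 - (rogers_L ((Q-1)/Q) + rogers_L 0) = rogers_L (1/Q)"
    using g0 refl by (simp add: rogers_L_0)
  with s show ?thesis using tm by simp
qed

lemma cf_rem_per:
  fixes u v :: real and A :: int
  assumes uv: "u * v = 1" and s: "u + v = 2 * of_int A" and v: "0 < v" "v < 1/2"
  shows "cf_rem u (2*k+1) = 1/(1-v) \<and> cf_rem u (2*k+2) = u - 1"
proof -
  have u: "u = 2 * of_int A - v" using s by simp
  have up: "u > 0" using uv v by (metis zero_less_mult_pos2 zero_less_one)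
  have vu: "v = 1/u" using uv up by (simp add: field_simps)
  have f1: "\<lfloor>1/(1-v)\<rfloor> = 1"
  proof -
    have "1 \<le> 1/(1-v)" "1/(1-v) < 2" using v by (auto simp: field_simps)
    thus ?thesis by (intro floor_unique) simp_all
  qed
  have f2: "\<lfloor>u - 1\<rfloor> = 2*A - 2"
  proof -
    have "of_int (2*A - 2) \<le> u - 1" "u - 1 < of_int (2*A-2) + 1" using u v by auto
    thus ?thesis by (intro floor_unique) simp_all
  qed
  have r2: "1/(1/(1-v) - of_int \<lfloor>1/(1-v)\<rfloor>) = u - 1"
  proof -
    have "1/(1-v) - 1 = v/(1-v)" using v by (simp add: field_simps)
    moreover have "(1-v)/v = u - 1" using uv v by (simp add: field_simps)
    ultimately show ?thesis unfolding f1 by simp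
  qed
  have r3: "1/((u - 1) - of_int \<lfloor>u - 1\<rfloor>) = 1/(1-v)"
    unfolding f2 using u by simp
  show ?thesis
  proof (induction k)
    case 0
    have f0: "\<lfloor>u\<rfloor> = 2*A - 1"
    proof -
      have "of_int (2*A - 1) \<le> u" "u < of_int (2*A-1) + 1" using u v by auto
      thus ?thesis by (intro floor_unique) simp_all
    qed
    have c1: "cf_rem u 1 = 1/(1-v)" using f0 u by (simp add: numeral_eq_Suc)
    have "cf_rem u 2 = 1/(cf_rem u 1 - of_int \<lfloor>cf_rem u 1\<rfloor>)" by (simp add: numeral_eq_Suc)
    with c1 r2 have c2: "cf_rem u 2 = u - 1" by simp
    show ?case using c1 c2 by (simp del: cf_rem.simps add: numeral_2_eq_2)
  next
    case (Suc k)
    have IH1: "cf_rem u (2*k+2) = u - 1" using Suc.IH by blast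
    have e1: "2*Suc k+1 = Suc (2*k+2)" by simp
    have a': "cf_rem u (2*Suc k+1) = 1/(1-v)"
      unfolding e1 cf_rem.simps(2) IH1 by (rule r3)
    have e2: "2*Suc k+2 = Suc (2*Suc k+1)" by simp
    have b': "cf_rem u (2*Suc k+2) = u - 1"
      unfolding e2 cf_rem.simps(2) a' by (rule r2)
    show ?case using a' b' by blast
  qed
qed

lemma cf_c_vals:
  fixes u v :: real and A :: int
  assumes uv: "u * v = 1" and s: "u + v = 2 * of_int A" and v: "0 < v" "v < 1/2"
  shows "cf_c u 0 = 2*A - 1" "cf_c u (2*k+1) = 1" "cf_c u (2*k+2) = 2*A - 2"
proof -
  have u: "u = 2 * of_int A - v" using s by simp
  note per = cf_rem_per[OF uv s v, of k]
  have "1 \<le> 1/(1-v)" "1/(1-v) < 2" using v by (auto simp: field_simps)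
  hence f1: "\<lfloor>1/(1-v)\<rfloor> = 1" by (intro floor_unique) simp_all
  have "of_int (2*A - 2) \<le> u - 1" "u - 1 < of_int (2*A-2) + 1" using u v by auto
  hence f2: "\<lfloor>u - 1\<rfloor> = 2*A - 2" by (intro floor_unique) simp_all
  have "of_int (2*A - 1) \<le> u" "u < of_int (2*A-1) + 1" using u v by auto
  hence f0: "\<lfloor>u\<rfloor> = 2*A - 1" by (intro floor_unique) simp_all
  show "cf_c u 0 = 2*A - 1" using f0 by (simp add: cf_c_def)
  show "cf_c u (2*k+1) = 1" using f1 per by (simp add: cf_c_def del: cf_rem.simps)
  show "cf_c u (2*k+2) = 2*A - 2" using f2 per by (simp add: cf_c_def del: cf_rem.simps)
qed

fun SS :: "int \<Rightarrow> nat \<Rightarrow> int" where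
  "SS A 0 = 0"
| "SS A (Suc 0) = 1"
| "SS A (Suc (Suc m)) = 2*A*SS A (Suc m) - SS A m"

lemma cf_hh_vals:
  fixes u v :: real and A :: int
  assumes uv: "u * v = 1" and s: "u + v = 2 * of_int A" and v: "0 < v" "v < 1/2"
  shows "cf_hh u (2*k+1) = SS A (k+1) \<and> cf_hh u (2*k+2) = SS A (k+2) - SS A (k+1)"
proof (induction k)
  case 0
  have "cf_hh u 2 = cf_c u 0 * cf_hh u 1 + cf_hh u 0" by (simp add: numeral_2_eq_2)
  also have "\<dots> = 2*A - 1" using cf_c_vals(1)[OF uv s v] by simp
  finally have H2: "cf_hh u 2 = 2*A - 1" .
  have S2: "SS A 2 = 2*A" by (simp add: numeral_2_eq_2)
  have H1: "cf_hh u 1 = 1" by simp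
  have S1: "SS A 1 = 1" by simp
  show ?case by (simp only: mult_0_right add_0 H1 H2 S1 S2)

next
  case (Suc k)
  have IH1: "cf_hh u (2*k+1) = SS A (k+1)" and IH2: "cf_hh u (2*k+2) = SS A (k+2) - SS A (k+1)"
    using Suc.IH by blast+
  have e1: "2*Suc k+1 = Suc (Suc (2*k+1))" by simp
  have x1: "Suc (2*k+1) = 2*k+2" by simp
  have a: "cf_hh u (2*Suc k+1) = SS A (Suc k+1)"
  proof -
    have "cf_hh u (2*Suc k+1) = cf_c u (2*k+1) * cf_hh u (2*k+2) + cf_hh u (2*k+1)"
      unfolding e1 cf_hh.simps(3) unfolding x1 ..
    also have "\<dots> = SS A (k+2)"
      by (simp only: IH1 IH2 cf_c_vals(2)[OF uv s v, of k]) simp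
    finally show ?thesis by simp
  qed
  have e2: "2*Suc k+2 = Suc (Suc (2*k+2))" by simp
  have x2: "Suc (2*k+2) = 2*Suc k+1" by simp
  have ss: "SS A (k+3) = 2*A*SS A (k+2) - SS A (k+1)"
    by (simp add: numeral_3_eq_3 numeral_2_eq_2)
  have b: "cf_hh u (2*Suc k+2) = SS A (Suc k+2) - SS A (Suc k+1)"
  proof -
    have "cf_hh u (2*Suc k+2) = cf_c u (2*k+2) * cf_hh u (2*Suc k+1) + cf_hh u (2*k+2)"
      unfolding e2 cf_hh.simps(3) unfolding x2 ..
    also have "\<dots> = (2*A-2) * SS A (k+2) + (SS A (k+2) - SS A (k+1))"
      by (simp only: a IH2 cf_c_vals(3)[OF uv s v, of k]) simp
    also have "\<dots> = SS A (k+3) - SS A (k+2)" unfolding ss by (simp add: algebra_simps)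
    finally show ?thesis by (simp add: numeral_3_eq_3 del: SS.simps)
  qed
  show ?case using a b by blast
qed

lemma SS_real:
  fixes u v :: real and A :: int
  assumes uv: "u * v = 1" and s: "u + v = 2 * of_int A"
  shows "real_of_int (SS A m) * (u - v) = u^m - v^m"
proof -
  have "real_of_int (SS A m) * (u - v) = u^m - v^m \<and>
        real_of_int (SS A (Suc m)) * (u - v) = u^(Suc m) - v^(Suc m)"
  proof (induction m)
    case 0 thus ?case by simp
  next
    case (Suc m)
    hence h0: "real_of_int (SS A m) * (u - v) = u^m - v^m"
      and h1: "real_of_int (SS A (Suc m)) * (u - v) = u^(Suc m) - v^(Suc m)" by blast+
    have r: "real_of_int (SS A (Suc (Suc m))) = 2 * of_int A * of_int (SS A (Suc m)) - of_int (SS A m)"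
      by simp
    have "real_of_int (SS A (Suc (Suc m))) * (u - v)
        = (u + v) * (real_of_int (SS A (Suc m)) * (u - v)) - 1 * (real_of_int (SS A m) * (u - v))"
      unfolding r s by (simp only: left_diff_distrib mult.assoc mult_1)
    also have "\<dots> = (u + v) * (u ^ Suc m - v ^ Suc m) - (u * v) * (u ^ m - v ^ m)"
      by (simp only: h0 h1 uv)
    also have "\<dots> = u ^ Suc (Suc m) - v ^ Suc (Suc m)" by (simp add: algebra_simps)
    finally show ?case using h1 by blast
  qed
  thus ?thesis by blast
qed

lemma recip_sq_ZZ:
  fixes u w :: real
  assumes u: "u > 1" and w: "w > 1"
  shows "(1 / ((w - 1/w) / (u - 1/u)))\<^sup>2 = ZZ (u\<^sup>2) (w\<^sup>2)"
proof -
  obtain c where c: "c = u\<^sup>2 - 1" by blast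
  obtain d where d: "d = w\<^sup>2 - 1" by blast
  have cp: "c > 0" using u c by (simp add: one_less_power)
  have dp: "d > 0" using w d by (simp add: one_less_power)
  have e1: "u - 1/u = c/u" using u c by (simp add: field_simps power2_eq_square)
  have e2: "w - 1/w = d/w" using w d by (simp add: field_simps power2_eq_square)
  have "(1 / ((w - 1/w) / (u - 1/u)))\<^sup>2 = c\<^sup>2 * w\<^sup>2 / (u\<^sup>2 * d\<^sup>2)"
    unfolding e1 e2 using u w cp dp by (simp add: field_simps power2_eq_square)
  also have "\<dots> = ZZ (u\<^sup>2) (w\<^sup>2)" unfolding ZZ_def c d by simp
  finally show ?thesis .
qed

theorem theorem2:
  fixes n :: nat and a b :: nat
  assumes "n \<ge> 2"
    and "\<not> (\<exists>m::nat. m ^ 2 = n)"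
    and "a > 0" and "b > 0"
    and "int a ^ 2 - int n * int b ^ 2 = 1"
  shows "(\<lambda>k. rogers_L (1 / (real_of_int (cf_h (a + b * sqrt n) (2 * k + 1)))\<^sup>2))
           sums rogers_L (1 / (a + b * sqrt n)\<^sup>2)"
proof -
  define u where "u = real a + real b * sqrt (real n)"
  define v where "v = real a - real b * sqrt (real n)"
  have sq: "(sqrt (real n))\<^sup>2 = real n" by simp
  have eqr: "(real a)\<^sup>2 - real n * (real b)\<^sup>2 = 1"
  proof -
    have "real_of_int (int a ^ 2 - int n * int b ^ 2) = 1" using assms(5) by simp
    thus ?thesis by simp
  qed
  have uv: "u * v = 1" unfolding u_def v_def using eqr sq
    by (simp add: algebra_simps power2_eq_square)
  have s: "u + v = 2 * of_int (int a)" unfolding u_def v_def by simp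
  have a2: "a \<ge> 2"
  proof (rule ccontr)
    assume "\<not> a \<ge> 2"
    hence "a \<le> 1" by simp
    hence "(real a)\<^sup>2 \<le> 1" using assms(3) by (simp add: power_le_one)
    moreover have "real n * (real b)\<^sup>2 \<ge> 2 * 1"
      using assms(1,4) by (intro mult_mono) (auto simp: one_le_power)
    ultimately show False using eqr by linarith
  qed
  have bs: "real b * sqrt (real n) > 0" using assms(1,4) by simp
  have ugt: "u > 2" unfolding u_def using a2 bs by linarith
  have up: "u > 0" using ugt by simp
  have vu: "v = 1/u" using uv up by (simp add: field_simps)
  have v1: "0 < 1/u" using up by simp
  have v2: "1/u < 1/2" using ugt by (simp add: divide_less_eq)
  have v: "0 < v" "v < 1/2" using v1 v2 vu by simp_all
  have uvd: "u - v > 0" unfolding u_def v_def using bs by simp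
  define Q where "Q = u\<^sup>2"
  have Q1: "Q > 1" unfolding Q_def using ugt by (simp add: one_less_power)
  have term_eq: "rogers_L (1 / (real_of_int (cf_h u (2 * k + 1)))\<^sup>2) = rogers_L (ZZ Q (Q^(k+2)))" for k
  proof -
    have "cf_h u (2*k+1) = cf_hh u (2*(k+1)+1)" by (simp add: cf_h_def)
    also have "\<dots> = SS (int a) (k+2)" using cf_hh_vals[OF uv s v, of "k+1"] by simp
    finally have h: "real_of_int (cf_h u (2*k+1)) = real_of_int (SS (int a) (k+2))" by simp
    have "real_of_int (SS (int a) (k+2)) = (u^(k+2) - v^(k+2)) / (u - v)"
      using SS_real[OF uv s, of "k+2"] uvd by (simp add: field_simps)
    also have "\<dots> = (u^(k+2) - 1/u^(k+2)) / (u - 1/u)" unfolding vu by (simp add: power_one_over)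
    finally have h2: "real_of_int (cf_h u (2*k+1)) = (u^(k+2) - 1/u^(k+2)) / (u - 1/u)" using h by simp
    have w: "u^(k+2) > 1" using ugt by (intro one_less_power) auto
    have "(1 / (real_of_int (cf_h u (2 * k + 1)))\<^sup>2) = (1 / real_of_int (cf_h u (2 * k + 1)))\<^sup>2"
      by (simp add: power_one_over)
    also have "\<dots> = ZZ (u\<^sup>2) ((u^(k+2))\<^sup>2)" unfolding h2 using ugt w by (intro recip_sq_ZZ) auto
    also have "(u^(k+2))\<^sup>2 = Q^(k+2)" unfolding Q_def by (metis power_mult mult.commute)
    finally show ?thesis unfolding Q_def by simp
  qed
  have "(\<lambda>k. rogers_L (ZZ Q (Q^(k+2)))) sums rogers_L (1/Q)" by (rule tele_sums[OF Q1])
  hence "(\<lambda>k. rogers_L (1 / (real_of_int (cf_h u (2 * k + 1)))\<^sup>2)) sums rogers_L (1/Q)"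
    using term_eq by simp
  thus ?thesis unfolding u_def Q_def by simp
qed

end
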